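(* Let $\eta\in(0,\frac12]$. For each cluster $V_i$, $i\in[k]$, let $B_i\subseteq V$ be an $(\eta,V_i)$-biased set of size at least $\frac{16\log n}{\eta^2\delta^2}$ (fixed independently of the oracle's answers on pairs involving it). Then with probability at least $1-n^{-6}$, the following holds for all $v\in V$ and all $i\in[k]$ simultaneously: (1) if $v\in V_i$, then $\mathsf{ClusterVerify}(v,B_i)$ returns TRUE; (2) if $v\notin V_i$, then $\mathsf{ClusterVerify}(v,B_i)$ returns FALSE.
   Context: Clustering with a faulty oracle: a set $V$ of $n$ vertices is partitioned into $k$ unknown clusters $V_1,\dots,V_k$; $\tau(u,v)=1$ if $u,v$ are in the same cluster, $-1$ otherwise. A query of pair $(u,v)$ returns $\tilde\tau(u,v)=\sigma_{u,v}\tau(u,v)$ with independent $\sigma_{u,v}\in\{\pm1\}$, $\Pr[\sigma_{u,v}=+1]=\frac12+\frac\delta2$, $\delta\in(0,1)$; repeated queries return the same answer. For $\eta\in[0,\frac12]$ and a cluster $C=V_i$, a set $B\subseteq V$ is $(\eta,C)$-biased if $|B\cap C|\ge(\frac12+\eta)|B|$. $\mathsf{ClusterVerify}(v,B)$: query $(v,u)$ for every $u\in B$, let $d(v,B)=\#\{u\in B:\tilde\tau(v,u)=1\}$, and output TRUE if $d(v,B)\ge\frac12|B|$, FALSE otherwise. *)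

theory Defs
  imports "HOL-Probability.Probability"
begin

definition is_partition :: "'a set \<Rightarrow> nat \<Rightarrow> (nat \<Rightarrow> 'a set) \<Rightarrow> bool" where
  "is_partition V k Cl \<longleftrightarrow>
     (\<forall>i\<in>{1..k}. Cl i \<noteq> {} \<and> Cl i \<subseteq> V) \<and>
     (\<forall>i\<in>{1..k}. \<forall>j\<in>{1..k}. i \<noteq> j \<longrightarrow> Cl i \<inter> Cl j = {}) \<and>
     (\<Union>i\<in>{1..k}. Cl i) = V"

definition tau :: "nat \<Rightarrow> (nat \<Rightarrow> 'a set) \<Rightarrow> 'a \<Rightarrow> 'a \<Rightarrow> int" where
  "tau k Cl u v = (if \<exists>i\<in>{1..k}. u \<in> Cl i \<and> v \<in> Cl i then 1 else -1)"

definition pairs :: "'a set \<Rightarrow> 'a set set" where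
  "pairs V = {{u, v} | u v. u \<in> V \<and> v \<in> V}"

(* Distribution of the noise sigma: independent signs on all unordered pairs,
  each equal to +1 with probability 1/2 + delta/2.  One value per pair means that
  repeated queries return the same answer. *)
definition noise_pmf :: "'a set \<Rightarrow> real \<Rightarrow> ('a set \<Rightarrow> int) pmf" where
  "noise_pmf V \<delta> = Pi_pmf (pairs V) 1
     (\<lambda>_. map_pmf (\<lambda>b. if b then 1 else -1) (bernoulli_pmf (1/2 + \<delta>/2)))"

definition noisy_answer :: "nat \<Rightarrow> (nat \<Rightarrow> 'a set) \<Rightarrow> ('a set \<Rightarrow> int) \<Rightarrow> 'a \<Rightarrow> 'a \<Rightarrow> int" where
  "noisy_answer k Cl \<sigma> u v = \<sigma> {u, v} * tau k Cl u v"

definition dvB :: "nat \<Rightarrow> (nat \<Rightarrow> 'a set) \<Rightarrow> ('a set \<Rightarrow> int) \<Rightarrow> 'a \<Rightarrow> 'a set \<Rightarrow> nat" where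
  "dvB k Cl \<sigma> v B = card {u \<in> B. noisy_answer k Cl \<sigma> v u = 1}"

definition cluster_verify :: "nat \<Rightarrow> (nat \<Rightarrow> 'a set) \<Rightarrow> ('a set \<Rightarrow> int) \<Rightarrow> 'a \<Rightarrow> 'a set \<Rightarrow> bool" where
  "cluster_verify k Cl \<sigma> v B \<longleftrightarrow> real (dvB k Cl \<sigma> v B) \<ge> real (card B) / 2"

definition biased :: "real \<Rightarrow> 'a set \<Rightarrow> 'a set \<Rightarrow> bool" where
  "biased \<eta> C B \<longleftrightarrow> real (card (B \<inter> C)) \<ge> (1/2 + \<eta>) * real (card B)"

end

theory Submission
  imports Defs
begin

lemma sum_if_card: "finite B \<Longrightarrow> (\<Sum>u\<in>B. if P u then 1 else (0::real)) = real (card {u\<in>B. P u})"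
proof -
  assume "finite B"
  have "B \<inter> Collect P = {u\<in>B. P u}" by blast
  then show ?thesis using \<open>finite B\<close> by (simp add: sum.If_cases)
qed

lemma hoeff_generic:
  fixes V B :: "'a set" and v :: 'a and t :: "'a \<Rightarrow> int" and \<delta> \<epsilon> :: real
  assumes finV: "finite V" and BV: "B \<subseteq> V" and vV: "v \<in> V" and Bne: "B \<noteq> {}"
    and d0: "0 < \<delta>" and d1: "\<delta> < 1" and eps: "\<epsilon> \<ge> 0"
    and t: "\<forall>u\<in>B. t u = 1 \<or> t u = -1"
  shows "measure_pmf.prob (noise_pmf V \<delta>)
            {\<sigma>. real (card {u\<in>B. \<sigma> {v,u} * t u = 1}) \<le> (\<Sum>u\<in>B. 1/2 + \<delta>/2 * t u) - \<epsilon>}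
           \<le> exp (-2 * \<epsilon>^2 / real (card B))"
    and "measure_pmf.prob (noise_pmf V \<delta>)
            {\<sigma>. real (card {u\<in>B. \<sigma> {v,u} * t u = 1}) \<ge> (\<Sum>u\<in>B. 1/2 + \<delta>/2 * t u) + \<epsilon>}
           \<le> exp (-2 * \<epsilon>^2 / real (card B))"
proof -
  define M where "M = measure_pmf (noise_pmf V \<delta>)"
  define f where "f = (\<lambda>u::'a. {v,u})"
  define S where "S = f ` B"
  define w where "w = inv_into B f"
  have injf: "inj_on f B" unfolding f_def inj_on_def by (auto simp: doubleton_eq_iff)
  have wf: "\<And>u. u \<in> B \<Longrightarrow> w (f u) = u" unfolding w_def using injf by (simp add: inv_into_f_f)
  have wf': "\<And>u. u \<in> B \<Longrightarrow> w {v,u} = u" using wf unfolding f_def by simp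
  have finB: "finite B" using finV BV finite_subset by blast
  have finS: "finite S" unfolding S_def using finB by simp
  have SP: "S \<subseteq> pairs V" unfolding S_def f_def pairs_def using BV vV by auto
  have finP: "finite (pairs V)"
  proof -
    have "pairs V = (\<lambda>(u,v). {u,v}) ` (V \<times> V)" unfolding pairs_def by auto
    thus ?thesis using finV by simp
  qed
  define Y where "Y = (\<lambda>p (\<sigma>::'a set \<Rightarrow> int). if \<sigma> p * t (w p) = 1 then (1::real) else 0)"
  have cardeq: "real (card {u\<in>B. \<sigma> {v,u} * t u = 1}) = (\<Sum>p\<in>S. Y p \<sigma>)" for \<sigma>
  proof -
    have "(\<Sum>p\<in>S. Y p \<sigma>) = (\<Sum>u\<in>B. Y (f u) \<sigma>)" unfolding S_def using injf by (simp add: sum.reindex)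
    also have "\<dots> = (\<Sum>u\<in>B. if \<sigma> {v,u} * t u = 1 then 1 else 0)"
      by (intro sum.cong) (auto simp: Y_def wf' f_def)
    also have "\<dots> = real (card {u\<in>B. \<sigma> {v,u} * t u = 1})"
      using finB by (rule sum_if_card)
    finally show ?thesis by simp
  qed
  have q0: "0 \<le> 1/2 + \<delta>/2" "1/2 + \<delta>/2 \<le> 1" using d0 d1 by auto
  have compo: "map_pmf (\<lambda>\<sigma>. \<sigma> p) (noise_pmf V \<delta>) =
      map_pmf (\<lambda>b. if b then 1 else -1) (bernoulli_pmf (1/2 + \<delta>/2))" if "p \<in> S" for p
    unfolding noise_pmf_def using that SP finP by (subst Pi_pmf_component) auto
  have EY: "measure_pmf.expectation (noise_pmf V \<delta>) (Y p) = 1/2 + \<delta>/2 * t (w p)" if "p \<in> S" for p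
  proof -
    have "measure_pmf.expectation (noise_pmf V \<delta>) (Y p) =
          measure_pmf.expectation (map_pmf (\<lambda>\<sigma>. \<sigma> p) (noise_pmf V \<delta>)) (\<lambda>s. if s * t (w p) = 1 then (1::real) else 0)"
      by (simp add: Y_def)
    also have "\<dots> = 1/2 + \<delta>/2 * t (w p)"
      unfolding compo[OF that] using q0 t that wf unfolding S_def
      by (auto simp: algebra_simps)
    finally show ?thesis .
  qed
  have sumE: "(\<Sum>p\<in>S. measure_pmf.expectation (noise_pmf V \<delta>) (Y p)) = (\<Sum>u\<in>B. 1/2 + \<delta>/2 * t u)"
  proof -
    have "(\<Sum>p\<in>S. measure_pmf.expectation (noise_pmf V \<delta>) (Y p)) = (\<Sum>p\<in>S. 1/2 + \<delta>/2 * t (w p))"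
      using EY by simp
    also have "\<dots> = (\<Sum>u\<in>B. 1/2 + \<delta>/2 * t u)" unfolding S_def using injf wf by (simp add: sum.reindex)
    finally show ?thesis .
  qed
  interpret PM: prob_space M unfolding M_def by (rule measure_pmf.prob_space_axioms)
  interpret H: Hoeffding_ineq M S Y "\<lambda>_. 0" "\<lambda>_. 1" "\<Sum>u\<in>B. 1/2 + \<delta>/2 * t u"
  proof unfold_locales
    show "finite S" by fact
    have "prob_space.indep_vars M (\<lambda>_. count_space UNIV) (\<lambda>x f. f x) (pairs V)"
      unfolding M_def noise_pmf_def by (rule indep_vars_Pi_pmf[OF finP])
    then have "prob_space.indep_vars M (\<lambda>_. count_space UNIV) (\<lambda>x f. f x) S"
      using SP by (rule PM.indep_vars_subset)
    then have "prob_space.indep_vars M (\<lambda>_. borel) (\<lambda>p x. (\<lambda>s. if s * t (w p) = 1 then (1::real) else 0) ((\<lambda>x f. f x) p x)) S"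
      by (rule PM.indep_vars_compose2) simp
    then show "prob_space.indep_vars M (\<lambda>_. borel) Y S"
      unfolding Y_def by simp
  next
    show "\<And>i. i \<in> S \<Longrightarrow> AE x in M. Y i x \<in> {0..1}" by (simp add: Y_def)
  next
    show "(\<Sum>u\<in>B. 1/2 + \<delta>/2 * t u) \<equiv> (\<Sum>i\<in>S. prob_space.expectation M (Y i))"
      using sumE by (simp add: M_def)
  qed
  have pos: "(\<Sum>i\<in>S. ((\<lambda>_. 1::real) i - (\<lambda>_. 0) i)\<^sup>2) = real (card B)"
    using injf by (simp add: S_def card_image)
  have cB: "real (card B) > 0" using finB Bne by (simp add: card_gt_0_iff)
  show "measure_pmf.prob (noise_pmf V \<delta>)
            {\<sigma>. real (card {u\<in>B. \<sigma> {v,u} * t u = 1}) \<le> (\<Sum>u\<in>B. 1/2 + \<delta>/2 * t u) - \<epsilon>}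
           \<le> exp (-2 * \<epsilon>^2 / real (card B))"
    using H.Hoeffding_ineq_le[OF eps] pos cB by (simp add: cardeq M_def)
  show "measure_pmf.prob (noise_pmf V \<delta>)
            {\<sigma>. real (card {u\<in>B. \<sigma> {v,u} * t u = 1}) \<ge> (\<Sum>u\<in>B. 1/2 + \<delta>/2 * t u) + \<epsilon>}
           \<le> exp (-2 * \<epsilon>^2 / real (card B))"
    using H.Hoeffding_ineq_ge[OF eps] pos cB by (simp add: cardeq M_def)
qed


lemma sum_pm_lower:
  fixes t :: "'a \<Rightarrow> int"
  assumes "finite B" "\<forall>u\<in>B. t u = 1 \<or> t u = -1" "\<forall>u\<in>B\<inter>C. t u = 1"
  shows "(\<Sum>u\<in>B. real_of_int (t u)) \<ge> 2 * real (card (B\<inter>C)) - real (card B)"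
proof -
  have "(\<Sum>u\<in>B. real_of_int (t u)) = (\<Sum>u\<in>B\<inter>C. real_of_int (t u)) + (\<Sum>u\<in>B-C. real_of_int (t u))"
    using assms(1) by (metis sum.Int_Diff)
  also have "(\<Sum>u\<in>B\<inter>C. real_of_int (t u)) = real (card (B\<inter>C))" using assms(3) by simp
  also have "(\<Sum>u\<in>B-C. real_of_int (t u)) \<ge> (\<Sum>u\<in>B-C. -1)"
    using assms(2) by (intro sum_mono) force
  moreover have "real (card (B-C)) = real (card B) - real (card (B\<inter>C))"
    using assms(1) card_Diff_subset_Int[of B C] 
    by (metis Diff_Diff_Int Diff_subset card_Diff_subset finite_Diff inf_le1 of_nat_diff card_mono)
  ultimately show ?thesis by simp
qed

lemma sum_pm_upper:
  fixes t :: "'a \<Rightarrow> int"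
  assumes "finite B" "\<forall>u\<in>B. t u = 1 \<or> t u = -1" "\<forall>u\<in>B\<inter>C. t u = -1"
  shows "(\<Sum>u\<in>B. real_of_int (t u)) \<le> real (card B) - 2 * real (card (B\<inter>C))"
proof -
  have "(\<Sum>u\<in>B. real_of_int (t u)) = (\<Sum>u\<in>B\<inter>C. real_of_int (t u)) + (\<Sum>u\<in>B-C. real_of_int (t u))"
    using assms(1) by (metis sum.Int_Diff)
  also have "(\<Sum>u\<in>B\<inter>C. real_of_int (t u)) = - real (card (B\<inter>C))" using assms(3) by simp
  also have "(\<Sum>u\<in>B-C. real_of_int (t u)) \<le> (\<Sum>u\<in>B-C. 1)"
    using assms(2) by (intro sum_mono) force
  moreover have "real (card (B-C)) = real (card B) - real (card (B\<inter>C))"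
    using assms(1) card_Diff_subset_Int[of B C] 
    by (metis Diff_Diff_Int Diff_subset card_Diff_subset finite_Diff inf_le1 of_nat_diff card_mono)
  ultimately show ?thesis by simp
qed

lemma cv_alt: "cluster_verify k Cl \<sigma> v B \<longleftrightarrow>
   real (card {u\<in>B. \<sigma> {v,u} * tau k Cl v u = 1}) \<ge> real (card B) / 2"
  unfolding cluster_verify_def dvB_def noisy_answer_def by simp

lemma tau_pm: "tau k Cl v u = 1 \<or> tau k Cl v u = -1"
  unfolding tau_def by simp


lemma expb:
  fixes m n \<epsilon> \<delta> \<eta> :: real
  assumes "m > 0" "n > 0" "\<delta> > 0" "\<eta> > 0" "\<epsilon> \<ge> \<delta> * \<eta> * m"
    "m \<ge> 16 * ln n / (\<eta>^2 * \<delta>^2)"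
  shows "exp (-2 * \<epsilon>^2 / m) \<le> 1 / n^32"
proof -
  have a: "m * (\<eta>^2 * \<delta>^2) \<ge> 16 * ln n" using assms(6) assms(3,4)
    by (simp add: pos_divide_le_eq)
  have "\<epsilon>^2 \<ge> (\<delta> * \<eta> * m)^2" using assms by (intro power_mono) auto
  hence "2 * \<epsilon>^2 / m \<ge> 2 * (\<delta> * \<eta> * m)^2 / m" using assms(1) by (intro divide_right_mono) auto
  also have "2 * (\<delta> * \<eta> * m)^2 / m = 2 * (m * (\<eta>^2 * \<delta>^2))" using assms(1)
    by (simp add: power2_eq_square field_simps)
  finally have "2 * \<epsilon>^2 / m \<ge> 32 * ln n" using a by linarith
  hence "exp (-2 * \<epsilon>^2 / m) \<le> exp (- (32 * ln n))" by simp
  also have "exp (- (32 * ln n)) = 1 / n^32"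
  proof -
    have "exp (32 * ln n) = exp (ln n)^32" using exp_of_nat_mult[of 32 "ln n"] by simp
    also have "\<dots> = n^32" using assms(2) by simp
    finally show ?thesis by (simp add: exp_minus inverse_eq_divide)
  qed
  finally show ?thesis .
qed

lemma bad_bound:
  fixes V :: "'a set" and k :: nat and Cl :: "nat \<Rightarrow> 'a set" and \<delta> \<eta> :: real and B :: "'a set"
  assumes finV: "finite V" and part: "is_partition V k Cl"
    and d0: "0 < \<delta>" and d1: "\<delta> < 1" and e0: "0 < \<eta>" and i: "i \<in> {1..k}" and vV: "v \<in> V"
    and BV: "B \<subseteq> V" and bi: "biased \<eta> (Cl i) B"
    and mb: "real (card B) \<ge> 16 * ln (real (card V)) / (\<eta>^2 * \<delta>^2)"
    and n2: "card V \<ge> 2"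
  shows "measure_pmf.prob (noise_pmf V \<delta>)
     {\<sigma>. \<not>((v \<in> Cl i \<longrightarrow> cluster_verify k Cl \<sigma> v B) \<and> (v \<notin> Cl i \<longrightarrow> \<not> cluster_verify k Cl \<sigma> v B))}
     \<le> 1 / real (card V) ^ 32"
proof -
  define n where "n = real (card V)"
  define m where "m = real (card B)"
  define t where "t = tau k Cl v"
  define a where "a = real (card (B \<inter> Cl i))"
  have n1: "n > 1" using n2 unfolding n_def by simp
  have "ln n > 0" using n1 by simp
  hence "16 * ln n / (\<eta>^2 * \<delta>^2) > 0" using d0 e0 by simp
  hence m0: "m > 0" using mb unfolding m_def n_def by linarith
  have finB: "finite B" using finV BV finite_subset by blast
  have Bne: "B \<noteq> {}" using m0 unfolding m_def by auto
  have tpm: "\<forall>u\<in>B. t u = 1 \<or> t u = -1" unfolding t_def by (auto simp: tau_def)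
  have abig: "a \<ge> (1/2 + \<eta>) * m" using bi unfolding biased_def a_def m_def by simp
  define \<mu> where "\<mu> = (\<Sum>u\<in>B. 1/2 + \<delta>/2 * t u)"
  have mu: "\<mu> = m/2 + \<delta>/2 * (\<Sum>u\<in>B. real_of_int (t u))"
    unfolding \<mu>_def m_def by (simp add: sum.distrib sum_distrib_left)
  let ?D = "\<lambda>\<sigma>. real (card {u\<in>B. \<sigma> {v,u} * t u = 1})"
  show ?thesis
  proof (cases "v \<in> Cl i")
    case True
    have "\<forall>u\<in>B\<inter>Cl i. t u = 1" unfolding t_def tau_def using True i by auto
    hence "(\<Sum>u\<in>B. real_of_int (t u)) \<ge> 2 * a - m"
      using sum_pm_lower[OF finB tpm] unfolding a_def m_def by blast
    moreover have "2*a - m \<ge> 2*\<eta>*m" using abig by (simp add: algebra_simps)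
    ultimately have "\<delta>/2 * (\<Sum>u\<in>B. real_of_int (t u)) \<ge> \<delta>/2 * (2*\<eta>*m)"
      using d0 by (intro mult_left_mono) auto
    hence mul: "\<mu> \<ge> m/2 + \<delta> * \<eta> * m" unfolding mu by simp
    define \<epsilon> where "\<epsilon> = \<mu> - m/2"
    have eps: "\<epsilon> \<ge> \<delta> * \<eta> * m" "\<epsilon> \<ge> 0" using mul mult_pos_pos[OF mult_pos_pos[OF d0 e0] m0] unfolding \<epsilon>_def by auto
    have "{\<sigma>. \<not>((v \<in> Cl i \<longrightarrow> cluster_verify k Cl \<sigma> v B) \<and> (v \<notin> Cl i \<longrightarrow> \<not> cluster_verify k Cl \<sigma> v B))}
          \<subseteq> {\<sigma>. ?D \<sigma> \<le> \<mu> - \<epsilon>}"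
      using True by (auto simp: cv_alt t_def \<epsilon>_def m_def)
    hence "measure_pmf.prob (noise_pmf V \<delta>)
     {\<sigma>. \<not>((v \<in> Cl i \<longrightarrow> cluster_verify k Cl \<sigma> v B) \<and> (v \<notin> Cl i \<longrightarrow> \<not> cluster_verify k Cl \<sigma> v B))}
      \<le> measure_pmf.prob (noise_pmf V \<delta>) {\<sigma>. ?D \<sigma> \<le> \<mu> - \<epsilon>}"
      by (rule measure_pmf.finite_measure_mono) simp
    also have "\<dots> \<le> exp (-2 * \<epsilon>^2 / m)"
      using hoeff_generic(1)[OF finV BV vV Bne d0 d1 eps(2) tpm] unfolding \<mu>_def m_def .
    also have "\<dots> \<le> 1 / n^32"
      using expb[OF m0 _ d0 e0 eps(1)] mb n1 unfolding m_def n_def by simp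
    finally show ?thesis unfolding n_def .
  next
    case False
    have "\<forall>u\<in>B\<inter>Cl i. t u = -1"
    proof
      fix u assume u: "u \<in> B \<inter> Cl i"
      have "\<not> (\<exists>j\<in>{1..k}. v \<in> Cl j \<and> u \<in> Cl j)"
      proof
        assume "\<exists>j\<in>{1..k}. v \<in> Cl j \<and> u \<in> Cl j"
        then obtain j where j: "j \<in> {1..k}" "v \<in> Cl j" "u \<in> Cl j" by blast
        have "i \<noteq> j" using False j by auto
        hence "Cl i \<inter> Cl j = {}" using part i j(1) unfolding is_partition_def by blast
        thus False using u j by blast
      qed
      thus "t u = -1" unfolding t_def tau_def by auto
    qed
    hence "(\<Sum>u\<in>B. real_of_int (t u)) \<le> m - 2 * a"
      using sum_pm_upper[OF finB tpm] unfolding a_def m_def by blast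
    moreover have "m - 2*a \<le> - (2*\<eta>*m)" using abig by (simp add: algebra_simps)
    ultimately have "\<delta>/2 * (\<Sum>u\<in>B. real_of_int (t u)) \<le> \<delta>/2 * (-(2*\<eta>*m))"
      using d0 by (intro mult_left_mono) auto
    hence mul: "\<mu> \<le> m/2 - \<delta> * \<eta> * m" unfolding mu by simp
    define \<epsilon> where "\<epsilon> = m/2 - \<mu>"
    have eps: "\<epsilon> \<ge> \<delta> * \<eta> * m" "\<epsilon> \<ge> 0" using mul mult_pos_pos[OF mult_pos_pos[OF d0 e0] m0] unfolding \<epsilon>_def by auto
    have "{\<sigma>. \<not>((v \<in> Cl i \<longrightarrow> cluster_verify k Cl \<sigma> v B) \<and> (v \<notin> Cl i \<longrightarrow> \<not> cluster_verify k Cl \<sigma> v B))}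
          \<subseteq> {\<sigma>. ?D \<sigma> \<ge> \<mu> + \<epsilon>}"
      using False by (auto simp: cv_alt t_def \<epsilon>_def m_def)
    hence "measure_pmf.prob (noise_pmf V \<delta>)
     {\<sigma>. \<not>((v \<in> Cl i \<longrightarrow> cluster_verify k Cl \<sigma> v B) \<and> (v \<notin> Cl i \<longrightarrow> \<not> cluster_verify k Cl \<sigma> v B))}
      \<le> measure_pmf.prob (noise_pmf V \<delta>) {\<sigma>. ?D \<sigma> \<ge> \<mu> + \<epsilon>}"
      by (rule measure_pmf.finite_measure_mono) simp
    also have "\<dots> \<le> exp (-2 * \<epsilon>^2 / m)"
      using hoeff_generic(2)[OF finV BV vV Bne d0 d1 eps(2) tpm] unfolding \<mu>_def m_def .
    also have "\<dots> \<le> 1 / n^32"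
      using expb[OF m0 _ d0 e0 eps(1)] mb n1 unfolding m_def n_def by simp
    finally show ?thesis unfolding n_def .
  qed
qed


lemma k_le_card:
  assumes "finite V" "is_partition V k Cl"
  shows "k \<le> card V"
proof -
  have ne: "\<forall>i\<in>{1..k}. Cl i \<noteq> {} \<and> Cl i \<subseteq> V" and dj: "\<forall>i\<in>{1..k}. \<forall>j\<in>{1..k}. i \<noteq> j \<longrightarrow> Cl i \<inter> Cl j = {}"
    and un: "(\<Union>i\<in>{1..k}. Cl i) = V" using assms(2) unfolding is_partition_def by blast+
  have fin: "\<forall>i\<in>{1..k}. finite (Cl i)" using ne assms(1) finite_subset by blast
  have "card V = (\<Sum>i\<in>{1..k}. card (Cl i))"
    using card_UN_disjoint[of "{1..k}" Cl] fin dj un by simp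
  also have "\<dots> \<ge> (\<Sum>i\<in>{1..k}. 1)"
    using ne fin by (intro sum_mono) (simp add: Suc_le_eq card_gt_0_iff)
  finally show ?thesis by simp
qed

theorem lemma3p4:
  fixes V :: "'a set" and k :: nat and Cl :: "nat \<Rightarrow> 'a set"
    and \<delta> \<eta> :: real and B :: "nat \<Rightarrow> 'a set"
  assumes "finite V" and "is_partition V k Cl"
    and "0 < \<delta>" and "\<delta> < 1" and "0 < \<eta>" and "\<eta> \<le> 1/2"
    and "\<forall>i\<in>{1..k}. B i \<subseteq> V \<and> biased \<eta> (Cl i) (B i) \<and>
           real (card (B i)) \<ge> 16 * ln (real (card V)) / (\<eta>^2 * \<delta>^2)"
  shows "measure_pmf.prob (noise_pmf V \<delta>)
           {\<sigma>. \<forall>v\<in>V. \<forall>i\<in>{1..k}.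
              (v \<in> Cl i \<longrightarrow> cluster_verify k Cl \<sigma> v (B i)) \<and>
              (v \<notin> Cl i \<longrightarrow> \<not> cluster_verify k Cl \<sigma> v (B i))}
         \<ge> 1 - 1 / real (card V) ^ 6"
proof (cases "card V \<ge> 2")
  case False
  show ?thesis
  proof (cases "card V = 0")
    case True
    hence "V = {}" using assms(1) by simp
    thus ?thesis by simp
  next
    case False
    with \<open>\<not> card V \<ge> 2\<close> have "card V = 1" by simp
    thus ?thesis by simp
  qed
next
  case n2: True
  define M where "M = noise_pmf V \<delta>"
  define bad where "bad = (\<lambda>(v,i). {\<sigma>. \<not>((v \<in> Cl i \<longrightarrow> cluster_verify k Cl \<sigma> v (B i)) \<and>
       (v \<notin> Cl i \<longrightarrow> \<not> cluster_verify k Cl \<sigma> v (B i)))})"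
  define n where "n = real (card V)"
  have n1: "n \<ge> 2" using n2 unfolding n_def by simp
  define I where "I = V \<times> {1..k}"
  have finI: "finite I" unfolding I_def using assms(1) by simp
  have cardI: "real (card I) \<le> n^2"
    unfolding I_def n_def using k_le_card[OF assms(1,2)]
    by (simp add: card_cartesian_product power2_eq_square mult_left_mono)
  have ev: "{\<sigma>. \<forall>v\<in>V. \<forall>i\<in>{1..k}.
              (v \<in> Cl i \<longrightarrow> cluster_verify k Cl \<sigma> v (B i)) \<and>
              (v \<notin> Cl i \<longrightarrow> \<not> cluster_verify k Cl \<sigma> v (B i))} = UNIV - (\<Union>p\<in>I. bad p)"
    unfolding I_def bad_def by auto
  have each: "measure_pmf.prob M (bad p) \<le> 1 / n^32" if pI: "p \<in> I" for p
  proof -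
    obtain v i where p: "p = (v,i)" "v \<in> V" "i \<in> {1..k}" using pI unfolding I_def by auto
    show ?thesis unfolding p(1) bad_def M_def n_def using bad_bound[OF assms(1,2,3,4,5) p(3) p(2), of "B i"] assms(7) p(3) n2
      by simp
  qed
  have "measure_pmf.prob M (\<Union>p\<in>I. bad p) \<le> (\<Sum>p\<in>I. measure_pmf.prob M (bad p))"
    by (rule measure_pmf.finite_measure_subadditive_finite[OF finI]) simp
  also have "\<dots> \<le> (\<Sum>p\<in>I. 1 / n^32)" using each by (rule sum_mono)
  also have "\<dots> = real (card I) / n^32" by simp
  also have "\<dots> \<le> n^2 / n^32" using cardI n1 by (intro divide_right_mono) auto
  also have "\<dots> \<le> 1 / n^6"
  proof -
    have "n^2 / n^32 = 1 / n^30" using n1 by (simp add: field_simps power_add[symmetric])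
    also have "\<dots> \<le> 1 / n^6" using n1
      by (intro divide_left_mono power_increasing) auto
    finally show ?thesis .
  qed
  finally have u: "measure_pmf.prob M (\<Union>p\<in>I. bad p) \<le> 1 / n^6" .
  have "measure_pmf.prob M (UNIV - (\<Union>p\<in>I. bad p)) = 1 - measure_pmf.prob M (\<Union>p\<in>I. bad p)"
    using measure_pmf.prob_compl[of "\<Union>p\<in>I. bad p" M] by simp
  thus ?thesis using u unfolding ev M_def n_def by simp
qed

end
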